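(* Let $\mathcal{D}=(\Omega,\mathcal{B})$ be a supersimple $2$-$(n,4,\lambda)$ design satisfying property $(\triangle)$, such that $(\Omega,\mathcal{C})$ is a regular two-graph where $\mathcal{C}$ is the set of collinear triples. Then for pairwise distinct $x,y,z\in\Omega$, $$[y,z]\cdot[x,y]\cdot[y,z]=\begin{cases}[x,y]&\text{if }x\in\overline{y,z},\\ [x,z]&\text{otherwise.}\end{cases}$$
   Context: A $2$-$(n,4,\lambda)$ design $(\Omega,\mathcal{B})$: $n$ points, a multiset of $4$-subsets (lines), every $2$-subset in exactly $\lambda$ lines; supersimple: distinct lines meet in at most two points. For distinct $a,b$ with lines $\{a,b,a_i,b_i\}$ through them, $[a,b]:=(a,b)\prod_i(a_i,b_i)\in\operatorname{Sym}(\Omega)$. Permutations act on the right, products composed left to right. For distinct $y,z$, $\overline{y,z}$ is the set of points $w$ such that some line contains $y,z,w$. Property $(\triangle)$: if $B_1,B_2\in\mathcal{B}$ with $|B_1\cap B_2|=2$ then $B_1\triangle B_2\in\mathcal{B}$. Regular two-graph: $(\Omega,\mathcal{C})$ is a $2$-$(n,3,\mu)$ design with every $4$-subset containing $0,2$ or $4$ members of $\mathcal{C}$. *)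

theory Defs
  imports Main "HOL-Library.Multiset"
begin

definition design_2 :: "'a set \<Rightarrow> 'a set multiset \<Rightarrow> nat \<Rightarrow> nat \<Rightarrow> nat \<Rightarrow> bool" where
  "design_2 \<Omega> \<B> n k lam \<longleftrightarrow>
     finite \<Omega> \<and> card \<Omega> = n \<and>
     (\<forall>B \<in># \<B>. B \<subseteq> \<Omega> \<and> card B = k) \<and>
     (\<forall>p \<in> \<Omega>. \<forall>q \<in> \<Omega>. p \<noteq> q \<longrightarrow> size (filter_mset (\<lambda>B. {p, q} \<subseteq> B) \<B>) = lam)"

text \<open>Supersimple: distinct lines (distinct members of the multiset, counted with
  multiplicity) meet in at most two points.  For repeated blocks this forbids
  multiplicity > 1.\<close>
definition supersimple :: "'a set multiset \<Rightarrow> bool" where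
  "supersimple \<B> \<longleftrightarrow>
     (\<forall>B \<in># \<B>. count \<B> B \<ge> 2 \<longrightarrow> card B \<le> 2) \<and>
     (\<forall>B1 \<in># \<B>. \<forall>B2 \<in># \<B>. B1 \<noteq> B2 \<longrightarrow> card (B1 \<inter> B2) \<le> 2)"

definition prop_triangle :: "'a set multiset \<Rightarrow> bool" where
  "prop_triangle \<B> \<longleftrightarrow>
     (\<forall>B1 \<in># \<B>. \<forall>B2 \<in># \<B>. card (B1 \<inter> B2) = 2 \<longrightarrow> (B1 - B2) \<union> (B2 - B1) \<in># \<B>)"

definition collinear_triples :: "'a set \<Rightarrow> 'a set multiset \<Rightarrow> 'a set set" where
  "collinear_triples \<Omega> \<B> = {T. T \<subseteq> \<Omega> \<and> card T = 3 \<and> (\<exists>B \<in># \<B>. T \<subseteq> B)}"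

definition regular_two_graph :: "'a set \<Rightarrow> 'a set set \<Rightarrow> bool" where
  "regular_two_graph \<Omega> \<C> \<longleftrightarrow>
     (\<exists>mu. design_2 \<Omega> (mset_set \<C>) (card \<Omega>) 3 mu) \<and> finite \<C> \<and>
     (\<forall>F. F \<subseteq> \<Omega> \<longrightarrow> card F = 4 \<longrightarrow> card {T \<in> \<C>. T \<subseteq> F} \<in> {0, 2, 4})"

definition line_through :: "'a set multiset \<Rightarrow> 'a \<Rightarrow> 'a \<Rightarrow> 'a set" where
  "line_through \<B> y z = {w. \<exists>B \<in># \<B>. {y, z, w} \<subseteq> B}"

text \<open>The involution [a,b] = (a,b) * prod_i (a_i,b_i), where the lines through a,b are
  {a,b,a_i,b_i}.  In a supersimple design these transpositions are disjoint, so the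
  product is the map swapping a and b, and swapping the two remaining points of each
  line through a and b, fixing all other points.\<close>
definition brk :: "'a set multiset \<Rightarrow> 'a \<Rightarrow> 'a \<Rightarrow> 'a \<Rightarrow> 'a" where
  "brk \<B> a b x =
     (if x = a then b
      else if x = b then a
      else if (\<exists>B \<in># \<B>. {a, b, x} \<subseteq> B)
        then (THE y. y \<notin> {a, b, x} \<and> (\<exists>B \<in># \<B>. {a, b, x, y} \<subseteq> B))
      else x)"

end

theory Submission
  imports Defs
begin

lemma c4: "distinct [p,q,r,s] \<Longrightarrow> card {x\<in>{p,q,r,s}. P x} \<in> {0,2,4} \<Longrightarrow> (P p = P q) = (P r = P s)"
proof -
  assume d: "distinct [p,q,r,s]" and c: "card {x\<in>{p,q,r,s}. P x} \<in> {0,2,4}"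
  have e: "{x\<in>{p,q,r,s}. P x} = (if P p then {p} else {}) \<union> (if P q then {q} else {}) \<union> (if P r then {r} else {}) \<union> (if P s then {s} else {})" by auto
  show ?thesis using c d unfolding e by (cases "P p"; cases "P q"; cases "P r"; cases "P s") auto
qed

lemma xor4: "((A::bool) = B) = (C = D) \<Longrightarrow> (D = C) = (B = A)"
  by argo

locale sdes =
  fixes Om :: "'a set" and BB :: "'a set multiset"
  assumes blk: "\<And>L. L \<in># BB \<Longrightarrow> L \<subseteq> Om \<and> card L = 4"
  and ss: "supersimple BB" and tri: "prop_triangle BB"
  and rtg: "regular_two_graph Om (collinear_triples Om BB)"
begin

definition line4 where "line4 p q r s \<longleftrightarrow> distinct [p,q,r,s] \<and> {p,q,r,s} \<in># BB"
definition col where "col p q r \<longleftrightarrow> (\<exists>L\<in>#BB. {p,q,r} \<subseteq> L)"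
abbreviation "br \<equiv> brk BB"

lemma fin: "L \<in># BB \<Longrightarrow> finite L"
  using blk by (metis card.infinite zero_neq_numeral)

lemma same3:
  assumes "L1 \<in># BB" "L2 \<in># BB" "{a,b,c} \<subseteq> L1" "{a,b,c} \<subseteq> L2" "distinct [a,b,c]"
  shows "L1 = L2"
proof (rule ccontr)
  assume "L1 \<noteq> L2"
  hence "card (L1 \<inter> L2) \<le> 2" using ss assms unfolding supersimple_def by blast
  moreover have "finite (L1 \<inter> L2)" using fin assms by blast
  moreover have "card {a,b,c} = 3" using assms(5) by simp
  moreover have "{a,b,c} \<subseteq> L1 \<inter> L2" using assms by blast
  ultimately have "3 \<le> card (L1 \<inter> L2)" using card_mono by metis
  thus False using \<open>card (L1 \<inter> L2) \<le> 2\<close> by linarith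
qed

lemma line4_same: "line4 a b c d \<Longrightarrow> line4 a b c e \<Longrightarrow> e = d"
proof -
  assume h1: "line4 a b c d" and h2: "line4 a b c e"
  have "{a,b,c,d} = {a,b,c,e}"
    by (rule same3[of _ _ a b c]) (use h1 h2 in \<open>auto simp: line4_def\<close>)
  thus ?thesis using h2 unfolding line4_def by auto
qed

lemma tri4: "line4 a b c d \<Longrightarrow> line4 a b e f \<Longrightarrow> c\<noteq>e \<Longrightarrow> c\<noteq>f \<Longrightarrow> d\<noteq>e \<Longrightarrow> d\<noteq>f \<Longrightarrow> line4 c d e f"
proof -
  assume h1: "line4 a b c d" and h2: "line4 a b e f" and n: "c\<noteq>e" "c\<noteq>f" "d\<noteq>e" "d\<noteq>f"
  let ?S1 = "{a,b,c,d}" and ?S2 = "{a,b,e,f}"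
  have "?S1 \<inter> ?S2 = {a,b}" using h1 h2 n by (auto simp: line4_def)
  hence "card (?S1 \<inter> ?S2) = 2" using h1 by (simp add: line4_def)
  hence "(?S1 - ?S2) \<union> (?S2 - ?S1) \<in># BB" using tri h1 h2 unfolding prop_triangle_def line4_def by blast
  moreover have "(?S1 - ?S2) \<union> (?S2 - ?S1) = {c,d,e,f}" using h1 h2 n by (auto simp: line4_def)
  ultimately show ?thesis using h1 h2 n by (auto simp: line4_def)
qed

lemma l4p: "line4 p q r s \<Longrightarrow> {p,q,r,s} = {p',q',r',s'} \<Longrightarrow> distinct [p',q',r',s'] \<Longrightarrow> line4 p' q' r' s'"
  by (simp add: line4_def)

lemma l4col: assumes "line4 p q r s" "{x,y,z} \<subseteq> {p,q,r,s}" shows "col x y z"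
  unfolding col_def using assms(1)[unfolded line4_def] assms(2) by blast

lemma l4Om: "line4 p q r s \<Longrightarrow> p \<in> Om \<and> q \<in> Om \<and> r \<in> Om \<and> s \<in> Om"
  using blk[of "{p,q,r,s}"] by (simp add: line4_def)

lemma brk_line: "line4 a b c d \<Longrightarrow> br a b c = d"
proof -
  assume h: "line4 a b c d"
  hence d: "c \<noteq> a" "c \<noteq> b" and m: "{a,b,c,d} \<in># BB" by (auto simp: line4_def)
  have ex: "\<exists>B\<in>#BB. {a,b,c} \<subseteq> B" using m by (intro bexI[of _ "{a,b,c,d}"]) auto
  have "(THE y. y \<notin> {a,b,c} \<and> (\<exists>B\<in>#BB. {a,b,c,y} \<subseteq> B)) = d"
  proof (rule the_equality)
    have "d \<notin> {a,b,c}" using h unfolding line4_def by (simp add: eq_commute)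
    moreover have "\<exists>B\<in>#BB. {a,b,c,d} \<subseteq> B" using m by (intro bexI[of _ "{a,b,c,d}"]) auto
    ultimately show "d \<notin> {a,b,c} \<and> (\<exists>B\<in>#BB. {a,b,c,d} \<subseteq> B)" by blast
  next
    fix y assume y: "y \<notin> {a,b,c} \<and> (\<exists>B\<in>#BB. {a,b,c,y} \<subseteq> B)"
    then obtain B where B: "B \<in># BB" "{a,b,c,y} \<subseteq> B" by blast
    have "B = {a,b,c,d}" by (rule same3[of _ _ a b c]) (use B m h in \<open>auto simp: line4_def\<close>)
    thus "y = d" using B y by auto
  qed
  moreover have "br a b c = (THE y. y \<notin> {a,b,c} \<and> (\<exists>B\<in>#BB. {a,b,c,y} \<subseteq> B))"
    using d ex unfolding brk_def by (simp only: if_False if_True)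
  ultimately show ?thesis by (rule trans[rotated])
qed

lemma col_line: "distinct [a,b,c] \<Longrightarrow> col a b c \<Longrightarrow> line4 a b c (br a b c)"
proof -
  assume d: "distinct [a,b,c]" and c: "col a b c"
  then obtain L where L: "L \<in># BB" "{a,b,c} \<subseteq> L" unfolding col_def by blast
  have "card L = 4" "finite L" using blk fin L by auto
  hence "card (L - {a,b,c}) = 1" using L d by (simp add: card_Diff_subset)
  then obtain e where e: "L - {a,b,c} = {e}" by (meson card_1_singletonE)
  hence "L = {a,b,c,e}" "e \<notin> {a,b,c}" using L by auto
  hence "line4 a b c e" using L d by (auto simp: line4_def)
  thus ?thesis using brk_line by simp
qed

lemma brk_nc: "c \<noteq> a \<Longrightarrow> c \<noteq> b \<Longrightarrow> \<not> col a b c \<Longrightarrow> br a b c = c"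
  unfolding brk_def col_def by auto

lemma brk_a[simp]: "br a b a = b" by (simp add: brk_def)
lemma brk_b[simp]: "br a b b = a" by (simp add: brk_def)

lemma brk_sym: "br a b = br b a"
proof (rule ext)
  fix x
  have e1: "\<And>B. ({a,b,x} \<subseteq> B) = ({b,a,x} \<subseteq> B)" "\<And>B y. ({a,b,x,y} \<subseteq> B) = ({b,a,x,y} \<subseteq> B)"
    and e2: "\<And>y. (y \<notin> {a,b,x}) = (y \<notin> {b,a,x})" by auto
  show "br a b x = br b a x" unfolding brk_def e1 e2 by simp
qed

lemma invol: assumes "a \<noteq> b" shows "br a b (br a b x) = x"
proof (cases "x = a \<or> x = b")
  case True thus ?thesis using assms by auto
next
  case False
  show ?thesis
  proof (cases "col a b x")
    case True
    hence h: "line4 a b x (br a b x)" using False assms col_line by auto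
    hence "line4 a b (br a b x) x" by (rule l4p) (use h in \<open>auto simp: line4_def\<close>)
    thus ?thesis by (rule brk_line)
  next
    case c: False
    thus ?thesis using False by (simp add: brk_nc)
  qed
qed

lemma inj_br: "a \<noteq> b \<Longrightarrow> br a b u = br a b v \<Longrightarrow> u = v"
  by (metis invol)

lemma parity:
  assumes d: "distinct [p,q,r,s]" and om: "{p,q,r,s} \<subseteq> Om"
  shows "(col p q r = col p q s) = (col p r s = col q r s)"
proof -
  define F where "F = {p,q,r,s}"
  define C where "C = collinear_triples Om BB"
  define P where "P x = (\<exists>L\<in>#BB. F - {x} \<subseteq> L)" for x
  have cF: "card F = 4" "finite F" using d by (auto simp: F_def)
  have cnt: "card {T\<in>C. T \<subseteq> F} \<in> {0,2,4}"
    using rtg om cF unfolding regular_two_graph_def C_def F_def by blast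
  have eq: "{T\<in>C. T \<subseteq> F} = (\<lambda>x. F - {x}) ` {x\<in>F. P x}"
  proof
    show "{T\<in>C. T \<subseteq> F} \<subseteq> (\<lambda>x. F - {x}) ` {x\<in>F. P x}"
    proof
      fix T assume T: "T \<in> {T\<in>C. T \<subseteq> F}"
      hence T3: "card T = 3" "T \<subseteq> F" "\<exists>L\<in>#BB. T \<subseteq> L" by (auto simp: C_def collinear_triples_def)
      hence "card (F - T) = 1" using cF by (simp add: card_Diff_subset finite_subset)
      then obtain x where x: "F - T = {x}" by (meson card_1_singletonE)
      hence "T = F - {x}" "x \<in> F" using T3 by auto
      thus "T \<in> (\<lambda>x. F - {x}) ` {x\<in>F. P x}" using T3 by (auto simp: P_def)
    qed
  next
    show "(\<lambda>x. F - {x}) ` {x\<in>F. P x} \<subseteq> {T\<in>C. T \<subseteq> F}"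
    proof
      fix T assume "T \<in> (\<lambda>x. F - {x}) ` {x\<in>F. P x}"
      then obtain x where x: "x \<in> F" "P x" "T = F - {x}" by auto
      have "card T = 3" using x cF by simp
      thus "T \<in> {T\<in>C. T \<subseteq> F}" using x om unfolding C_def collinear_triples_def P_def F_def by auto
    qed
  qed
  have inj: "inj_on (\<lambda>x. F - {x}) {x\<in>F. P x}" by (auto simp: inj_on_def)
  have "card {x\<in>F. P x} \<in> {0,2,4}" using cnt unfolding eq card_image[OF inj] .
  hence "(P p = P q) = (P r = P s)" using c4[OF d] unfolding F_def by blast
  moreover have "F - {p} = {q,r,s}" "F - {q} = {p,r,s}" "F - {r} = {p,q,s}" "F - {s} = {p,q,r}"
    using d by (auto simp: F_def)
  ultimately have "(col q r s = col p r s) = (col p q s = col p q r)" unfolding P_def col_def by simp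
  thus ?thesis by (rule xor4)
qed


lemma B1:
  assumes ab: "a \<noteq> b" and M: "line4 a p q r" and b: "b \<notin> {p,q,r}" and c: "col a b p"
  shows "line4 b (br a b p) q r"
proof -
  have d: "distinct [a,b,p]" using M b ab by (auto simp: line4_def)
  have L: "line4 a b p (br a b p)" using col_line[OF d c] .
  have L': "line4 a p b (br a b p)" by (rule l4p[OF L]) (use L in \<open>auto simp: line4_def\<close>)
  have nq: "br a b p \<noteq> q"
  proof
    assume e: "br a b p = q"
    have "line4 a p q b" by (rule l4p[OF L]) (use L e in \<open>auto simp: line4_def\<close>)
    hence "b = r" using line4_same[OF M] by blast
    thus False using b by auto
  qed
  have nr: "br a b p \<noteq> r"
  proof
    assume e: "br a b p = r"
    have "line4 a p r b" by (rule l4p[OF L]) (use L e in \<open>auto simp: line4_def\<close>)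
    moreover have "line4 a p r q" by (rule l4p[OF M]) (use M in \<open>auto simp: line4_def\<close>)
    ultimately have "b = q" using line4_same by blast
    thus False using b by auto
  qed
  show ?thesis using tri4[OF L' M] b nq nr by auto
qed

lemma B0:
  assumes ab: "a \<noteq> b" and om: "a \<in> Om" "b \<in> Om" and M: "line4 a p q r" and b: "b \<notin> {p,q,r}"
    and n: "\<not> col a b p" "\<not> col a b q" "\<not> col a b r"
  shows "line4 b p q r"
proof -
  have cpq: "col a p q" using l4col[OF M] by auto
  have "(col a b p = col a b q) = (col a p q = col b p q)"
    by (rule parity) (use M b ab om l4Om[OF M] in \<open>auto simp: line4_def\<close>)
  hence cb: "col b p q" using n cpq by simp
  have d: "distinct [b,p,q]" using M b by (auto simp: line4_def)
  have T: "line4 b p q (br b p q)" using col_line[OF d cb] .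
  show ?thesis
  proof (cases "br b p q = r")
    case True thus ?thesis using T by simp
  next
    case False
    have ta: "br b p q \<noteq> a"
    proof
      assume "br b p q = a"
      hence "col a b p" using l4col[OF T] by auto
      thus False using n by simp
    qed
    have T': "line4 p q b (br b p q)" by (rule l4p[OF T]) (use T in \<open>auto simp: line4_def\<close>)
    have M': "line4 p q a r" by (rule l4p[OF M]) (use M in \<open>auto simp: line4_def\<close>)
    have "line4 b (br b p q) a r" using tri4[OF T' M'] ab b ta False by auto
    hence "col a b r" using l4col by auto
    thus ?thesis using n by simp
  qed
qed

lemma B2:
  assumes ab: "a \<noteq> b" and om: "a \<in> Om" "b \<in> Om" and M: "line4 a p q r" and b: "b \<notin> {p,q,r}"
    and c: "col a b p" "col a b q"
  shows "col a b r"
proof -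
  have M': "line4 a q p r" by (rule l4p[OF M]) (use M in \<open>auto simp: line4_def\<close>)
  have "line4 b (br a b q) p r" using B1[OF ab M' _ c(2)] b by auto
  hence cbpr: "col b p r" using l4col by auto
  have capr: "col a p r" using l4col[OF M] by auto
  have "(col a b p = col a b r) = (col a p r = col b p r)"
    by (rule parity) (use M b ab om l4Om[OF M] in \<open>auto simp: line4_def\<close>)
  thus ?thesis using c cbpr capr by simp
qed

lemma B3:
  assumes ab: "a \<noteq> b" and M: "line4 a p q r" and b: "b \<notin> {p,q,r}"
    and c: "col a b p" "col a b q" "col a b r"
  shows "line4 b (br a b p) (br a b q) (br a b r)"
proof -
  have dp: "distinct [a,b,p]" "distinct [a,b,q]" "distinct [a,b,r]" using M b ab by (auto simp: line4_def)
  have Lp: "line4 a b p (br a b p)" using col_line[OF dp(1) c(1)] .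
  have Lq: "line4 a b q (br a b q)" using col_line[OF dp(2) c(2)] .
  have Lr: "line4 a b r (br a b r)" using col_line[OF dp(3) c(3)] .
  have X: "line4 b (br a b p) q r" using B1[OF ab M b c(1)] .
  have pq: "p \<noteq> q" "p \<noteq> r" "q \<noteq> r" using M by (auto simp: line4_def)
  have i1: "br a b q \<noteq> br a b p" "br a b r \<noteq> br a b q" "br a b r \<noteq> br a b p"
    using pq by (auto dest: inj_br[OF ab])
  have qr: "br a b q \<noteq> r"
  proof
    assume e: "br a b q = r"
    have "line4 a q r b" by (rule l4p[OF Lq]) (use Lq e in \<open>auto simp: line4_def\<close>)
    moreover have "line4 a q r p" by (rule l4p[OF M]) (use M in \<open>auto simp: line4_def\<close>)
    ultimately have "b = p" using line4_same by blast
    thus False using b by auto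
  qed
  have Lq': "line4 b q a (br a b q)" by (rule l4p[OF Lq]) (use Lq in \<open>auto simp: line4_def\<close>)
  have X': "line4 b q (br a b p) r" by (rule l4p[OF X]) (use X in \<open>auto simp: line4_def\<close>)
  have Y: "line4 a (br a b q) (br a b p) r"
    using tri4[OF Lq' X'] Lp M i1 qr by (auto simp: line4_def)
  have Lr': "line4 a r b (br a b r)" by (rule l4p[OF Lr]) (use Lr in \<open>auto simp: line4_def\<close>)
  have Y': "line4 a r (br a b q) (br a b p)" by (rule l4p[OF Y]) (use Y in \<open>auto simp: line4_def\<close>)
  have Z: "line4 b (br a b r) (br a b q) (br a b p)"
    using tri4[OF Lr' Y'] Lp Lq i1 by (auto simp: line4_def)
  show ?thesis by (rule l4p[OF Z]) (use Z in \<open>auto simp: line4_def\<close>)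
qed

lemma caseB:
  assumes ab: "a \<noteq> b" and om: "a \<in> Om" "b \<in> Om" and M: "line4 a p q r" and b: "b \<notin> {p,q,r}"
  shows "line4 b (br a b p) (br a b q) (br a b r)"
proof -
  have Mq: "line4 a q p r" by (rule l4p[OF M]) (use M in \<open>auto simp: line4_def\<close>)
  have Mr: "line4 a r p q" by (rule l4p[OF M]) (use M in \<open>auto simp: line4_def\<close>)
  have bq: "b \<notin> {q,p,r}" "b \<notin> {r,p,q}" using b by auto
  have nc: "\<And>x. x \<in> {p,q,r} \<Longrightarrow> \<not> col a b x \<Longrightarrow> br a b x = x"
    using M b by (intro brk_nc) (auto simp: line4_def)
  show ?thesis
  proof (cases "col a b p")
    case cp: True
    show ?thesis
    proof (cases "col a b q")
      case cq: True
      have "col a b r" using B2[OF ab om M b cp cq] .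
      thus ?thesis using B3[OF ab M b cp cq] by simp
    next
      case cq: False
      have "\<not> col a b r" using B2[OF ab om Mr bq(2)] cp cq by blast
      thus ?thesis using B1[OF ab M b cp] nc cq by simp
    qed
  next
    case cp: False
    show ?thesis
    proof (cases "col a b q")
      case cq: True
      have Mqr: "line4 a q r p" by (rule l4p[OF M]) (use M in \<open>auto simp: line4_def\<close>)
      have "\<not> col a b r" using B2[OF ab om Mqr] b cp cq by blast
      hence X: "line4 b (br a b q) p r" using B1[OF ab Mq bq(1) cq] by simp
      have "line4 b p (br a b q) r" by (rule l4p[OF X]) (use X in \<open>auto simp: line4_def\<close>)
      thus ?thesis using nc cp \<open>\<not> col a b r\<close> by simp
    next
      case cq: False
      show ?thesis
      proof (cases "col a b r")
        case cr: True
        hence X: "line4 b (br a b r) p q" using B1[OF ab Mr bq(2) cr] by simp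
        have "line4 b p q (br a b r)" by (rule l4p[OF X]) (use X in \<open>auto simp: line4_def\<close>)
        thus ?thesis using nc cp cq by simp
      next
        case cr: False
        thus ?thesis using B0[OF ab om M b cp cq cr] nc cp cq by simp
      qed
    qed
  qed
qed



lemma caseC:
  assumes ab: "a \<noteq> b" and om: "a \<in> Om" "b \<in> Om" and M: "line4 u v w t"
    and a: "a \<notin> {u,v,w,t}" and b: "b \<notin> {u,v,w,t}" and c: "col a u v"
  shows "br a b ` {u,v,w,t} \<in># BB"
proof -
  have du: "distinct [a,u,v]" using M a by (auto simp: line4_def)
  have N: "line4 a u v (br a u v)" using col_line[OF du c] .
  have N': "line4 u v a (br a u v)" by (rule l4p[OF N]) (use N in \<open>auto simp: line4_def\<close>)
  have M': "line4 u v w t" using M .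
  show ?thesis
  proof (cases "br a u v = b")
    case True
    have W: "line4 a b w t" using tri4[OF N' M'] a b True by auto
    have e1: "br a b u = v" by (rule brk_line) (rule l4p[OF N], use N True in \<open>auto simp: line4_def\<close>)
    have e2: "br a b v = u" by (rule brk_line) (rule l4p[OF N], use N True in \<open>auto simp: line4_def\<close>)
    have e3: "br a b w = t" by (rule brk_line) (rule W)
    have e4: "br a b t = w" by (rule brk_line) (rule l4p[OF W], use W in \<open>auto simp: line4_def\<close>)
    have "br a b ` {u,v,w,t} = {u,v,w,t}" using e1 e2 e3 e4 by auto
    thus ?thesis using M by (simp add: line4_def)
  next
    case False
    let ?c = "br a u v"
    have cw: "?c \<noteq> w"
    proof
      assume e: "?c = w"
      have "line4 u v w a" by (rule l4p[OF N]) (use N e in \<open>auto simp: line4_def\<close>)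
      hence "a = t" using line4_same[OF M] by blast
      thus False using a by auto
    qed
    have ct: "?c \<noteq> t"
    proof
      assume e: "?c = t"
      have "line4 u v t a" by (rule l4p[OF N]) (use N e in \<open>auto simp: line4_def\<close>)
      moreover have "line4 u v t w" by (rule l4p[OF M]) (use M in \<open>auto simp: line4_def\<close>)
      ultimately have "a = w" using line4_same by blast
      thus False using a by auto
    qed
    have N2: "line4 a ?c w t" using tri4[OF N' M'] a cw ct by auto
    have BN: "line4 b (br a b u) (br a b v) (br a b ?c)" using caseB[OF ab om N] b False by auto
    have BN2: "line4 b (br a b ?c) (br a b w) (br a b t)" using caseB[OF ab om N2] b False by auto
    have BN': "line4 b (br a b ?c) (br a b u) (br a b v)" by (rule l4p[OF BN]) (use BN in \<open>auto simp: line4_def\<close>)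
    have dM: "u \<noteq> w" "u \<noteq> t" "v \<noteq> w" "v \<noteq> t" using M by (auto simp: line4_def)
    have nn: "br a b u \<noteq> br a b w" "br a b u \<noteq> br a b t" "br a b v \<noteq> br a b w" "br a b v \<noteq> br a b t"
      using dM by (auto dest: inj_br[OF ab])
    have R: "line4 (br a b u) (br a b v) (br a b w) (br a b t)"
      using tri4[OF BN' BN2 nn] .
    thus ?thesis by (simp add: line4_def)
  qed
qed

lemma card4: "card L = 4 \<Longrightarrow> \<exists>p q r t. L = {p,q,r,t} \<and> distinct [p,q,r,t]"
proof -
  assume "card L = 4"
  hence "card L = Suc 3" by simp
  then obtain p B where pB: "L = insert p B" "p \<notin> B" "card B = 3" unfolding card_Suc_eq by blast
  then obtain q r t where "B = {q,r,t}" "q \<noteq> r" "r \<noteq> t" "q \<noteq> t" unfolding card_3_iff by blast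
  thus ?thesis using pB by auto
qed

lemma card4x: "card L = 4 \<Longrightarrow> x \<in> L \<Longrightarrow> \<exists>q r t. L = {x,q,r,t} \<and> distinct [x,q,r,t]"
proof -
  assume c: "card L = 4" and x: "x \<in> L"
  hence "finite L" by (metis card.infinite zero_neq_numeral)
  hence "card (L - {x}) = 3" using c x by simp
  then obtain q r t where "L - {x} = {q,r,t}" "q \<noteq> r" "r \<noteq> t" "q \<noteq> t" unfolding card_3_iff by blast
  thus ?thesis using x by auto
qed

lemma autom:
  assumes ab: "a \<noteq> b" and om: "a \<in> Om" "b \<in> Om" and L: "L \<in># BB"
  shows "br a b ` L \<in># BB"
proof -
  have cL: "card L = 4" using blk L by auto
  show ?thesis
  proof (cases "a \<in> L")
    case aL: True
    show ?thesis
    proof (cases "b \<in> L")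
      case bL: True
      have into: "\<And>x. x \<in> L \<Longrightarrow> br a b x \<in> L"
      proof -
        fix x assume x: "x \<in> L"
        show "br a b x \<in> L"
        proof (cases "x = a \<or> x = b")
          case True thus ?thesis using aL bL by auto
        next
          case False
          have d: "distinct [a,b,x]" using False ab by auto
          have "col a b x" using aL bL x L by (auto simp: col_def)
          hence L2: "line4 a b x (br a b x)" using col_line[OF d] by simp
          have "L = {a,b,x,br a b x}"
            by (rule same3[of _ _ a b x]) (use L2 L aL bL x d in \<open>auto simp: line4_def\<close>)
          thus ?thesis by auto
        qed
      qed
      have "br a b ` L = L"
      proof
        show "br a b ` L \<subseteq> L" using into by auto
        show "L \<subseteq> br a b ` L"
        proof
          fix x assume "x \<in> L"
          hence "br a b (br a b x) = x" "br a b x \<in> L" using invol[OF ab] into by auto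
          thus "x \<in> br a b ` L" by (metis imageI)
        qed
      qed
      thus ?thesis using L by simp
    next
      case bL: False
      obtain q r t where qrt: "L = {a,q,r,t}" "distinct [a,q,r,t]" using card4x[OF cL aL] by blast
      hence M: "line4 a q r t" using L by (simp add: line4_def)
      have "line4 b (br a b q) (br a b r) (br a b t)" using caseB[OF ab om M] bL qrt by auto
      thus ?thesis using qrt by (simp add: line4_def)
    qed
  next
    case aL: False
    show ?thesis
    proof (cases "b \<in> L")
      case bL: True
      obtain q r t where qrt: "L = {b,q,r,t}" "distinct [b,q,r,t]" using card4x[OF cL bL] by blast
      hence M: "line4 b q r t" using L by (simp add: line4_def)
      have "line4 a (br b a q) (br b a r) (br b a t)" using caseB[OF ab[symmetric] om(2,1) M] aL qrt by auto
      hence "line4 a (br a b q) (br a b r) (br a b t)" using brk_sym[of b a] by simp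
      thus ?thesis using qrt by (simp add: line4_def)
    next
      case bL: False
      obtain p q r t where pqrt: "L = {p,q,r,t}" "distinct [p,q,r,t]" using card4[OF cL] by blast
      hence M: "line4 p q r t" using L by (simp add: line4_def)
      have "col p q r" using l4col[OF M] by auto
      moreover have "(col a p q = col a p r) = (col a q r = col p q r)"
        by (rule parity) (use pqrt aL l4Om[OF M] om in \<open>auto\<close>)
      ultimately have "col a p q \<or> col a p r \<or> col a q r" by blast
      moreover have "col a p q \<Longrightarrow> ?thesis" using caseC[OF ab om M] aL bL pqrt by auto
      moreover have "col a p r \<Longrightarrow> ?thesis"
      proof -
        assume c: "col a p r"
        have M': "line4 p r q t" by (rule l4p[OF M]) (use M in \<open>auto simp: line4_def\<close>)
        have e: "{p,r,q,t} = L" using pqrt by auto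
        show ?thesis using caseC[OF ab om M' _ _ c] aL bL unfolding e by auto
      qed
      moreover have "col a q r \<Longrightarrow> ?thesis"
      proof -
        assume c: "col a q r"
        have M': "line4 q r p t" by (rule l4p[OF M]) (use M in \<open>auto simp: line4_def\<close>)
        have e: "{q,r,p,t} = L" using pqrt by auto
        show ?thesis using caseC[OF ab om M' _ _ c] aL bL unfolding e by auto
      qed
      ultimately show ?thesis by blast
    qed
  qed
qed

lemma conj:
  assumes ab: "a \<noteq> b" and om: "a \<in> Om" "b \<in> Om" and cd: "c \<noteq> d"
  shows "br a b (br c d v) = br (br a b c) (br a b d) (br a b v)"
proof -
  note inj = inj_br[OF ab]
  have sc: "br a b c \<noteq> br a b d" using cd by (auto dest: inj)
  show ?thesis
  proof (cases "v = c \<or> v = d")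
    case True thus ?thesis using sc by auto
  next
    case False
    show ?thesis
    proof (cases "col c d v")
      case True
      have dd: "distinct [c,d,v]" using False cd by auto
      have N: "line4 c d v (br c d v)" using col_line[OF dd True] .
      have "br a b ` {c,d,v,br c d v} \<in># BB" using autom[OF ab om, of "{c,d,v,br c d v}"] N by (simp add: line4_def)
      moreover have "distinct [br a b c, br a b d, br a b v, br a b (br c d v)]"
        using N unfolding line4_def by (auto dest: inj)
      ultimately have L': "line4 (br a b c) (br a b d) (br a b v) (br a b (br c d v))" by (simp add: line4_def)
      show ?thesis using brk_line[OF L'] by simp
    next
      case nc: False
      have n1: "br a b v \<noteq> br a b c" "br a b v \<noteq> br a b d" using False by (auto dest: inj)
      have n2: "\<not> col (br a b c) (br a b d) (br a b v)"
      proof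
        assume "col (br a b c) (br a b d) (br a b v)"
        then obtain K where K: "K \<in># BB" "{br a b c, br a b d, br a b v} \<subseteq> K" unfolding col_def by blast
        have im0: "br a b ` K \<in># BB" using autom[OF ab om K(1)] .
        have im: "\<And>x. br a b x \<in> K \<Longrightarrow> x \<in> br a b ` K" using invol[OF ab] by (metis imageI)
        moreover have "{c,d,v} \<subseteq> br a b ` K" using K(2) im by auto
        ultimately have "col c d v" unfolding col_def using im0 by (intro bexI[of _ "br a b ` K"])
        thus False using nc by simp
      qed
      show ?thesis using brk_nc[OF n1 n2] brk_nc[of v c d] False nc by simp
    qed
  qed
qed

lemma L4h: "line4 a b c d \<Longrightarrow> w \<notin> {a,b,c,d} \<Longrightarrow> col a b w \<Longrightarrow> line4 c d w (br a b w)"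
proof -
  assume M: "line4 a b c d" and w: "w \<notin> {a,b,c,d}" and c: "col a b w"
  have dd: "distinct [a,b,w]" using M w by (auto simp: line4_def)
  have N: "line4 a b w (br a b w)" using col_line[OF dd c] .
  have vc: "br a b w \<noteq> c"
  proof
    assume e: "br a b w = c"
    have "line4 a b c w" by (rule l4p[OF N]) (use N e in \<open>auto simp: line4_def\<close>)
    hence "w = d" using line4_same[OF M] by blast
    thus False using w by auto
  qed
  have vd: "br a b w \<noteq> d"
  proof
    assume e: "br a b w = d"
    have "line4 a b d w" by (rule l4p[OF N]) (use N e in \<open>auto simp: line4_def\<close>)
    moreover have "line4 a b d c" by (rule l4p[OF M]) (use M in \<open>auto simp: line4_def\<close>)
    ultimately have "w = c" using line4_same by blast
    thus False using w by auto
  qed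
  show ?thesis using tri4[OF M N] w vc vd by auto
qed

lemma L4: assumes M: "line4 a b c d" shows "br a b = br c d"
proof (rule ext)
  fix w
  have M': "line4 c d a b" by (rule l4p[OF M]) (use M in \<open>auto simp: line4_def\<close>)
  have M2: "line4 a b d c" by (rule l4p[OF M]) (use M in \<open>auto simp: line4_def\<close>)
  have M3: "line4 c d b a" by (rule l4p[OF M]) (use M in \<open>auto simp: line4_def\<close>)
  show "br a b w = br c d w"
  proof (cases "w \<in> {a,b,c,d}")
    case True
    thus ?thesis using brk_line[OF M] brk_line[OF M'] brk_line[OF M2] brk_line[OF M3] by auto
  next
    case False
    have w': "w \<notin> {c,d,a,b}" using False by auto
    show ?thesis
    proof (cases "col a b w")
      case True
      show ?thesis using brk_line[OF L4h[OF M False True]] by simp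
    next
      case nab: False
      show ?thesis
      proof (cases "col c d w")
        case True
        have "col a b w" using l4col[OF L4h[OF M' w' True]] by auto
        thus ?thesis using nab by simp
      next
        case False
        thus ?thesis using nab brk_nc w' by auto
      qed
    qed
  qed
qed

end

theorem lemma4p4:
  fixes \<Omega> :: "'a set" and \<B> :: "'a set multiset" and n lam :: nat and x y z :: 'a
  assumes "design_2 \<Omega> \<B> n 4 lam"
    and "supersimple \<B>"
    and "prop_triangle \<B>"
    and "regular_two_graph \<Omega> (collinear_triples \<Omega> \<B>)"
    and "x \<in> \<Omega>" and "y \<in> \<Omega>" and "z \<in> \<Omega>"
    and "x \<noteq> y" and "y \<noteq> z" and "x \<noteq> z"
  shows "brk \<B> y z \<circ> brk \<B> x y \<circ> brk \<B> y z =
           (if x \<in> line_through \<B> y z then brk \<B> x y else brk \<B> x z)"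
proof -
  interpret D: sdes \<Omega> \<B>
    using assms(1-4) unfolding sdes_def design_2_def by blast
  have key: "\<And>w. brk \<B> y z (brk \<B> x y (brk \<B> y z w)) = brk \<B> (brk \<B> y z x) z w"
    using D.conj[OF assms(9) assms(6,7) assms(8)] D.invol[OF assms(9)] by simp
  show ?thesis
  proof (cases "x \<in> line_through \<B> y z")
    case True
    hence c: "D.col y z x" unfolding line_through_def D.col_def by simp
    have dd: "distinct [y,z,x]" using assms(8-10) by auto
    have N: "D.line4 y z x (brk \<B> y z x)" using D.col_line[OF dd c] .
    have N': "D.line4 x y (brk \<B> y z x) z" by (rule D.l4p[OF N]) (use N in \<open>auto simp: D.line4_def\<close>)
    have "brk \<B> x y = brk \<B> (brk \<B> y z x) z" using D.L4[OF N'] .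
    thus ?thesis using True key by (simp add: fun_eq_iff)
  next
    case False
    hence c: "\<not> D.col y z x" unfolding line_through_def D.col_def by simp
    have "brk \<B> y z x = x" using D.brk_nc[OF _ _ c] assms(8-10) by auto
    thus ?thesis using False key by (simp add: fun_eq_iff)
  qed
qed

end
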